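(* Let $a_1\ge1$ be an integer, let $m_1, m_2 \ge 1$ be coprime integers, let $\bm{x}^{(1)}, \bm{x}^{(2)} \in \mathcal{L}(f)$, and put $\tau_i := \tau(\bm{x}^{(i)}; m_i)$ for $i \in \{1,2\}$. If $\rho(\bm{x}^{(2)}; m_2) = \tau_2$, then there exists $\bm{x} \in \mathcal{L}(f)$ such that $x_j \equiv x^{(i)}_j \pmod{m_i}$ for all $j\ge0$ and each $i\in\{1,2\}$, and $$\rho(\bm{x}; m_1m_2) = \frac{\tau_2}{d}\sum_{r=0}^{d-1}\rho(\bm{x}^{(1)}; m_1, r, d),$$ where $d := \gcd(\tau_1,\tau_2)$.
   Context: Let $f := X^2 - a_1X - 1$. $\mathcal{L}(f)$ is the set of integer sequences $\bm{x}=(x_n)_{n\ge0}$ with $x_{n+2} = a_1x_{n+1} + x_n$ for all $n\ge0$. For an integer $m\ge1$, $\tau(\bm{x}; m)$ is the minimal integer $t \ge 1$ with $x_{n+t}\equiv x_n \pmod m$ for all sufficiently large $n$, and $\rho(\bm{x};m) := \#\{x_n \bmod m : n\ge0\}$. For integers $m, d \ge 1$ and $r$, $\rho(\bm{x}; m, r, d) := \#\{x_n \bmod m : n \ge 0,\ n \equiv r \pmod d\}$. *)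

theory Defs
  imports Complex_Main
begin

text \<open>The set L(f) of integer linear recurrence sequences for f = X^2 - a1 X - 1.\<close>
definition lrs :: "int \<Rightarrow> (nat \<Rightarrow> int) set" where
  "lrs a1 = {x. \<forall>n. x (n + 2) = a1 * x (n + 1) + x n}"

definition tau :: "(nat \<Rightarrow> int) \<Rightarrow> int \<Rightarrow> nat" where
  "tau x m = (LEAST t. t \<ge> 1 \<and> (\<exists>N. \<forall>n\<ge>N. x (n + t) mod m = x n mod m))"

definition rho :: "(nat \<Rightarrow> int) \<Rightarrow> int \<Rightarrow> nat" where
  "rho x m = card {x n mod m | n. True}"

definition rho_ap :: "(nat \<Rightarrow> int) \<Rightarrow> int \<Rightarrow> int \<Rightarrow> nat \<Rightarrow> nat" where
  "rho_ap x m r d = card {x n mod m | n. int n mod int d = r mod int d}"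

end

theory Submission imports Defs "HOL-Number_Theory.Number_Theory" begin

lemma lrs_rec: "x \<in> lrs a \<Longrightarrow> x (n + 2) = a * x (n + 1) + x n"
  by (simp add: lrs_def)

lemma back_period:
  assumes x: "x \<in> lrs a" and h: "\<forall>n\<ge>N. x (n + t) mod m = x n mod m"
  shows "x (n + t) mod m = x n mod m"
proof -
  have "\<forall>n\<ge>N - k. x (n + t) mod m = x n mod m" for k
  proof (induction k)
    case 0 then show ?case using h by simp
  next
    case (Suc k)
    show ?case
    proof (intro allI impI)
      fix n assume n: "N - Suc k \<le> n"
      show "x (n + t) mod m = x n mod m"
      proof (cases "N - k \<le> n")
        case True then show ?thesis using Suc by blast
      next
        case False
        then have n1: "N - k \<le> n + 1" and n2: "N - k \<le> n + 2" using n by auto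
        have e1: "x (n + t) = x (n + t + 2) - a * x (n + t + 1)"
          using lrs_rec[OF x, of "n + t"] by simp
        have e2: "x n = x (n + 2) - a * x (n + 1)"
          using lrs_rec[OF x, of n] by simp
        have c1: "x (n + 2 + t) mod m = x (n + 2) mod m" using Suc n2 by blast
        have c2: "x (n + 1 + t) mod m = x (n + 1) mod m" using Suc n1 by blast
        have c1': "x (n + t + 2) mod m = x (n + 2) mod m" using c1 by (simp add: ac_simps)
        have c2': "x (n + t + 1) mod m = x (n + 1) mod m" using c2 by (simp add: ac_simps)
        have "(x (n + t + 2) - a * x (n + t + 1)) mod m = (x (n + 2) - a * x (n + 1)) mod m"
          by (rule mod_diff_cong[OF c1' mod_mult_cong[OF refl c2']])
        then show ?thesis using e1 e2 by simp
      qed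
    qed
  qed
  from this[of N] show ?thesis by simp
qed

lemma exists_period:
  assumes x: "x \<in> lrs a" and m: "m \<ge> 1"
  shows "\<exists>t\<ge>1. \<forall>n. x (n + t) mod m = x n mod m"
proof -
  define f where "f n = (x n mod m, x (n + 1) mod m)" for n
  have "range f \<subseteq> {0..<m} \<times> {0..<m}" using m by (auto simp: f_def)
  then have "finite (range f)" by (meson finite_SigmaI finite_atLeastLessThan_int finite_subset)
  then have "\<not> inj f" using finite_imageD by blast
  then obtain i j where ij: "i < j" "f i = f j"
    by (metis linorder_neqE_nat inj_on_def UNIV_I)
  define t where "t = j - i"
  have "x (i + k + t) mod m = x (i + k) mod m \<and> x (i + k + 1 + t) mod m = x (i + k + 1) mod m" for k
  proof (induction k)
    case 0 then show ?case using ij by (simp add: f_def t_def)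
  next
    case (Suc k)
    have e1: "x (i + k + 2 + t) = a * x (i + k + 1 + t) + x (i + k + t)"
      using lrs_rec[OF x, of "i + k + t"] by (simp add: add.commute add.left_commute)
    have e2: "x (i + k + 2) = a * x (i + k + 1) + x (i + k)"
      using lrs_rec[OF x, of "i + k"] by (simp add: add.commute add.left_commute)
    have "x (i + k + 2 + t) mod m = x (i + k + 2) mod m"
      unfolding e1 e2 using Suc by (intro mod_add_cong mod_mult_cong) simp_all
    then show ?case using Suc by (simp add: add.commute add.left_commute)
  qed
  note KK = this
  then have "\<forall>n\<ge>i. x (n + t) mod m = x n mod m"
  proof (intro allI impI)
    fix n assume "i \<le> n"
    then obtain k where "n = i + k" using le_Suc_ex by blast
    then show "x (n + t) mod m = x n mod m" using KK by blast
  qed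
  then have "\<forall>n. x (n + t) mod m = x n mod m" using back_period[OF x] by blast
  moreover have "t \<ge> 1" using ij by (simp add: t_def)
  ultimately show ?thesis by blast
qed

lemma tau_props:
  assumes x: "x \<in> lrs a" and m: "m \<ge> 1"
  shows "tau x m \<ge> 1" "x (n + tau x m) mod m = x n mod m"
proof -
  obtain t where t: "t \<ge> 1" "\<forall>n. x (n + t) mod m = x n mod m" using exists_period[OF x m] by blast
  let ?P = "\<lambda>t. t \<ge> 1 \<and> (\<exists>N. \<forall>n\<ge>N. x (n + t) mod m = x n mod m)"
  have "?P t" using t by blast
  then have "?P (tau x m)" unfolding tau_def by (rule LeastI)
  then show "tau x m \<ge> 1" "x (n + tau x m) mod m = x n mod m"
    using back_period[OF x] by blast+
qed

lemma period_mult: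
  fixes x :: "nat \<Rightarrow> int"
  assumes "\<And>n. x (n + t) mod m = x n mod m"
  shows "x (n + t * k) mod m = x n mod m"
proof (induction k)
  case 0 then show ?case by simp
next
  case (Suc k)
  have "x (n + t * Suc k) = x ((n + t * k) + t)" by (simp add: algebra_simps)
  then show ?case using assms Suc by simp
qed

lemma period_mod:
  fixes x :: "nat \<Rightarrow> int"
  assumes "\<And>n. x (n + t) mod m = x n mod m"
  shows "x n mod m = x (n mod t) mod m"
  using period_mult[of x t m "n mod t" "n div t", OF assms] by (simp add: mult.commute)

lemma card_range_eq:
  assumes "\<And>a b. F a = F b \<longleftrightarrow> G a = G b"
  shows "card (range F) = card (range G)"
proof -
  define h where "h y = G (SOME n. F n = y)" for y
  have hF: "h (F n) = G n" for n
  proof -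
    have "F (SOME k. F k = F n) = F n" by (rule someI) (rule refl)
    then show ?thesis using assms by (simp add: h_def)
  qed
  have "inj_on h (range F)" by (auto simp: inj_on_def hF assms)
  moreover have "h ` range F = range G" by (simp add: hF image_image)
  ultimately show ?thesis using card_image by metis
qed

lemma sum_mod_blocks:
  fixes f :: "nat \<Rightarrow> real"
  shows "(\<Sum>s<d*k. f (s mod d)) = real k * (\<Sum>r<d. f r)"
proof (induction k)
  case 0 thus ?case by simp
next
  case (Suc k)
  have "(\<Sum>s<d*Suc k. f (s mod d)) = (\<Sum>s\<in>{0..<d*k}. f (s mod d)) + (\<Sum>s\<in>{d*k..<d*Suc k}. f (s mod d))"
    using sum.atLeastLessThan_concat[of 0 "d*k" "d*Suc k" "\<lambda>s. f (s mod d)"]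
    by (simp add: lessThan_atLeast0)
  also have "(\<Sum>s\<in>{d*k..<d*Suc k}. f (s mod d)) = (\<Sum>s\<in>{0+d*k..<d+d*k}. f (s mod d))"
    by (simp add: add.commute)
  also have "\<dots> = (\<Sum>r\<in>{0..<d}. f ((r + d*k) mod d))" by (rule sum.shift_bounds_nat_ivl)
  also have "\<dots> = (\<Sum>r<d. f r)" by (intro sum.cong) auto
  finally show ?case using Suc by (simp add: lessThan_atLeast0 algebra_simps)
qed

theorem mainTheorem15:
  fixes a1 m1 m2 :: int and x1 x2 :: "nat \<Rightarrow> int"
  assumes "a1 \<ge> 1" and "m1 \<ge> 1" and "m2 \<ge> 1" and "coprime m1 m2"
    and "x1 \<in> lrs a1" and "x2 \<in> lrs a1"
    and "rho x2 m2 = tau x2 m2"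
  shows "\<exists>x \<in> lrs a1.
           (\<forall>j. x j mod m1 = x1 j mod m1) \<and> (\<forall>j. x j mod m2 = x2 j mod m2) \<and>
           real (rho x (m1 * m2)) =
             real (tau x2 m2) / real (gcd (tau x1 m1) (tau x2 m2)) *
             (\<Sum>r = 0..<gcd (tau x1 m1) (tau x2 m2).
                real (rho_ap x1 m1 (int r) (gcd (tau x1 m1) (tau x2 m2))))"
proof -
  define P1 where "P1 = tau x1 m1"
  define P2 where "P2 = tau x2 m2"
  define d where "d = gcd P1 P2"
  have P1: "P1 \<ge> 1" "\<And>n. x1 (n + P1) mod m1 = x1 n mod m1"
    using tau_props[OF assms(5) assms(2)] by (auto simp: P1_def)
  have P2: "P2 \<ge> 1" "\<And>n. x2 (n + P2) mod m2 = x2 n mod m2"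
    using tau_props[OF assms(6) assms(3)] by (auto simp: P2_def)
  have d0: "d \<ge> 1" using P1 by (simp add: d_def Suc_le_eq)
  obtain u where u: "[m2 * u = 1] (mod m1)"
    using cong_solve_coprime_int[of m2 m1] assms(4) by (auto simp: coprime_commute)
  obtain v where v: "[m1 * v = 1] (mod m2)"
    using cong_solve_coprime_int[of m1 m2] assms(4) by auto
  define x where "x j = m2 * u * x1 j + m1 * v * x2 j" for j
  have xl: "x \<in> lrs a1"
    using assms(5,6) unfolding lrs_def x_def by (simp add: algebra_simps)
  have c1: "x j mod m1 = x1 j mod m1" for j
  proof -
    have "[m2 * u * x1 j + m1 * v * x2 j = 1 * x1 j + 0 * x2 j] (mod m1)"
      by (intro cong_add cong_mult u cong_refl) (simp add: cong_def)
    then show ?thesis by (simp add: x_def cong_def)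
  qed
  have c2: "x j mod m2 = x2 j mod m2" for j
  proof -
    have "[m2 * u * x1 j + m1 * v * x2 j = 0 * x1 j + 1 * x2 j] (mod m2)"
      by (intro cong_add cong_mult v cong_refl) (simp add: cong_def)
    then show ?thesis by (simp add: x_def cong_def)
  qed
  have R: "{x2 n mod m2 |n. True} = (\<lambda>n. x2 n mod m2) ` {..<P2}"
  proof
    show "{x2 n mod m2 |n. True} \<subseteq> (\<lambda>n. x2 n mod m2) ` {..<P2}"
    proof
      fix y assume "y \<in> {x2 n mod m2 |n. True}"
      then obtain n where "y = x2 n mod m2" by blast
      then have "y = x2 (n mod P2) mod m2" using period_mod[of x2 P2 m2 n] P2 by simp
      moreover have "n mod P2 < P2" using P2 by simp
      ultimately show "y \<in> (\<lambda>n. x2 n mod m2) ` {..<P2}" by blast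
    qed
  qed blast
  have "card ((\<lambda>n. x2 n mod m2) ` {..<P2}) = card {..<P2}"
    using assms(7) R by (simp add: rho_def P2_def)
  then have inj: "inj_on (\<lambda>n. x2 n mod m2) {..<P2}"
    by (intro eq_card_imp_inj_on) simp_all
  have X2: "x2 a mod m2 = x2 b mod m2 \<longleftrightarrow> a mod P2 = b mod P2" for a b
  proof -
    have ea: "x2 a mod m2 = x2 (a mod P2) mod m2" using period_mod[of x2 P2 m2 a] P2 by simp
    have eb: "x2 b mod m2 = x2 (b mod P2) mod m2" using period_mod[of x2 P2 m2 b] P2 by simp
    have "a mod P2 < P2" "b mod P2 < P2" using P2 by auto
    then show ?thesis using ea eb inj_onD[OF inj] by fastforce
  qed
  have key: "x a mod (m1*m2) = x b mod (m1*m2) \<longleftrightarrow>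
      (x1 a mod m1, a mod P2) = (x1 b mod m1, b mod P2)" for a b
  proof -
    have "x a mod (m1*m2) = x b mod (m1*m2) \<longleftrightarrow> [x a = x b] (mod m1*m2)" by (simp add: cong_def)
    also have "\<dots> \<longleftrightarrow> [x a = x b] (mod m1) \<and> [x a = x b] (mod m2)"
      using coprime_cong_mult[of "x a" "x b" m1 m2] assms(4) cong_modulus_mult[of "x a" "x b" m1 m2]
        cong_modulus_mult[of "x a" "x b" m2 m1] by (auto simp: mult.commute)
    also have "\<dots> \<longleftrightarrow> x1 a mod m1 = x1 b mod m1 \<and> x2 a mod m2 = x2 b mod m2"
      by (simp add: cong_def c1 c2)
    finally show ?thesis using X2 by simp
  qed
  define G where "G n = (n mod P2, x1 n mod m1)" for n
  have "rho x (m1*m2) = card (range (\<lambda>n. x n mod (m1*m2)))"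
    unfolding rho_def by (rule arg_cong[where f=card]) blast
  also have "\<dots> = card (range G)"
    by (rule card_range_eq) (auto simp: key G_def)
  finally have rho1: "rho x (m1*m2) = card (range G)" .
  define T where "T r = {x1 n mod m1 |n. n mod d = r}" for r
  have finT: "finite (T r)" for r
  proof (rule finite_subset)
    show "T r \<subseteq> {0..<m1}" using assms(2) by (auto simp: T_def)
  qed simp
  have dP2: "d dvd P2" "d dvd P1" by (simp_all add: d_def)
  have crt: "\<exists>n'. n' mod P2 = s \<and> x1 n' mod m1 = x1 n mod m1"
    if s: "s < P2" and nd: "n mod d = s mod d" for s n
  proof -
    obtain a b where ab: "P1 * a = P2 * b + d" using bezout_nat[of P1 P2] P1 by (auto simp: d_def)
    define s' where "s' = s + P2 * n"
    have "n \<le> P2 * n" using P2 by simp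
    then have "n \<le> s'" unfolding s'_def by (rule trans_le_add2)
    moreover have "s' mod d = n mod d"
    proof -
      obtain c where "P2 * n = d * c" using dP2 by (metis dvd_mult2 dvd_def)
      then show ?thesis using nd by (simp add: s'_def)
    qed
    ultimately have "d dvd s' - n" using mod_eq_dvd_iff_nat by blast
    then obtain q where q: "s' - n = d * q" by blast
    define n' where "n' = n + P1 * (a * q)"
    have "n' = n + (P2 * b + d) * q" using ab by (simp add: n'_def mult.assoc[symmetric])
    also have "\<dots> = s' + P2 * (b * q)" using q \<open>n \<le> s'\<close> by (simp add: algebra_simps)
    also have "\<dots> = s + P2 * (n + b * q)" by (simp add: s'_def algebra_simps)
    finally have "n' mod P2 = s" using s by simp
    moreover have "x1 n' mod m1 = x1 n mod m1"
      unfolding n'_def by (rule period_mult) (rule P1(2))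
    ultimately show ?thesis by blast
  qed
  define S where "S s = {x1 n mod m1 |n. n mod P2 = s}" for s
  have ST: "S s = T (s mod d)" if sP: "s < P2" for s
  proof
    show "S s \<subseteq> T (s mod d)"
    proof
      fix y assume "y \<in> S s"
      then obtain n where "y = x1 n mod m1" "n mod P2 = s" by (auto simp: S_def)
      moreover have "n mod d = (n mod P2) mod d" using dP2 by (simp add: mod_mod_cancel)
      ultimately show "y \<in> T (s mod d)" by (auto simp: T_def)
    qed
    show "T (s mod d) \<subseteq> S s"
    proof
      fix y assume "y \<in> T (s mod d)"
      then obtain n where "y = x1 n mod m1" "n mod d = s mod d" by (auto simp: T_def)
      moreover obtain n' where "n' mod P2 = s" "x1 n' mod m1 = x1 n mod m1"
        using crt[OF sP \<open>n mod d = s mod d\<close>] by blast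
      ultimately show "y \<in> S s" unfolding S_def by (metis (mono_tags, lifting) mem_Collect_eq)
    qed
  qed
  have P2pos: "0 < P2" using P2 by simp
  have "range G = Sigma {..<P2} S"
    using P2pos by (auto simp: G_def S_def)
  then have "card (range G) = (\<Sum>s<P2. card (S s))"
    using finT ST by simp
  also have "\<dots> = (\<Sum>s<P2. card (T (s mod d)))" by (intro sum.cong) (simp_all add: ST)
  finally have rho2: "real (rho x (m1*m2)) = (\<Sum>s<P2. real (card (T (s mod d))))"
    using rho1 by simp
  obtain k where k: "P2 = d * k" using dP2 by blast
  have "(\<Sum>s<P2. real (card (T (s mod d)))) = real k * (\<Sum>r<d. real (card (T r)))"
    unfolding k by (rule sum_mod_blocks)
  moreover have "real k = real P2 / real d" using k d0 by simp
  moreover have "(\<Sum>r<d. real (card (T r))) = (\<Sum>r = 0..<d. real (rho_ap x1 m1 (int r) d))"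
  proof (unfold lessThan_atLeast0, intro sum.cong refl)
    fix r assume "r \<in> {0..<d}"
    then have "int r mod int d = int r" by simp
    then have "rho_ap x1 m1 (int r) d = card {x1 n mod m1 |n. n mod d = r}"
      unfolding rho_ap_def by (simp add: zmod_int[symmetric])
    then show "real (card (T r)) = real (rho_ap x1 m1 (int r) d)" by (simp add: T_def)
  qed
  ultimately have "real (rho x (m1*m2)) = real P2 / real d * (\<Sum>r = 0..<d. real (rho_ap x1 m1 (int r) d))"
    using rho2 by simp
  then show ?thesis using xl c1 c2 unfolding d_def P1_def P2_def by blast
qed

end
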